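(* Let $r \geq 4$, let $t \geq 1$, and let $H_t$ be a member of the family $\mathcal H_t$ (defined in the context), with vertex sequence $V_0 \subset V_1 \subset \cdots \subset V_t$ and added vertices $v_1,\dots,v_t$. Run the $K_r$-bootstrap process starting from $H_t$. Then: (a) for every vertex $u \in V_{t-2}$ (with $V_{-1} := \emptyset$), the edge $\{u, v_t\}$ is either already present in $H_t$ or becomes active precisely at time $t$; (b) for every $0 \leq s \leq t$, at time $s$ the vertex set $V_s$ spans a complete graph in $\langle H_t \rangle_s$, i.e. $\langle H_t\rangle_s[V_s] \cong K_{r-1+s}$.
   Context: $K_r$-bootstrap percolation: for a graph $G$ on vertex set $[n]$, set $G_0 := G$ and $G_{t+1} := G_t \cup \{e : \exists$ a copy $H$ of $K_r$ with $e \in H \subseteq G_t \cup \{e\}\}$; write $\langle G \rangle_t := G_t$. The family $\mathcal H_t$ ($t \geq 1$) is defined recursively. Let $H_0$ be an $(r-1)$-clique (the body) with vertex set $V_0$, and let $v_0$ be an arbitrary fixed vertex of $V_0$. A graph $H_t \in \mathcal H_t$ has vertex set $V_t := V_{t-1} \cup \{v_t\}$ with a new vertex $v_t$, and satisfies: (i) $H_t[V_{t-1}] = H_{t-1}$ for some $H_{t-1} \in \mathcal H_{t-1}$ (with $\mathcal H_0=\{H_0\}$); (ii) $v_{t-1} \in N(v_t)$; (iii) $|N(v_t)| = r-2$, where $N(v_t) \subseteq V_{t-1}$; (iv) for $t \geq 2$, $N(v_t) \setminus \{v_{t-1}\} \not\subseteq N(v_{t-1})$. For $t=1$ conditions (i)–(iii)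 make $H_1$ the graph $K_r$ minus one edge, and $\mathcal H_1 = \{K_r - e\}$. Such $H_t$ has $r-1+t$ vertices and $\binom{r-1}{2} + t(r-2)$ edges. *)

theory Defs
  imports Main
begin

text \<open>Simple graphs on vertex type nat are represented by their edge sets:
  an edge is a 2-element set of vertices.\<close>

type_synonym graph = "nat set set"

definition is_clique :: "graph \<Rightarrow> nat set \<Rightarrow> bool" where
  "is_clique G K \<longleftrightarrow> (\<forall>x\<in>K. \<forall>y\<in>K. x \<noteq> y \<longrightarrow> {x, y} \<in> G)"

definition bp_step :: "nat \<Rightarrow> graph \<Rightarrow> graph" where
  "bp_step r G = G \<union> {e. card e = 2 \<and>
      (\<exists>K. finite K \<and> card K = r \<and> e \<subseteq> K \<and> is_clique (G \<union> {e}) K)}"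

definition bp :: "nat \<Rightarrow> graph \<Rightarrow> nat \<Rightarrow> graph" where
  "bp r G s = (bp_step r ^^ s) G"

definition Vset :: "nat set \<Rightarrow> (nat \<Rightarrow> nat) \<Rightarrow> nat \<Rightarrow> nat set" where
  "Vset V0 v s = V0 \<union> v ` {1..s}"

definition Hedges :: "nat set \<Rightarrow> (nat \<Rightarrow> nat) \<Rightarrow> (nat \<Rightarrow> nat set) \<Rightarrow> nat \<Rightarrow> graph" where
  "Hedges V0 v N t = {{x, y} | x y. x \<in> V0 \<and> y \<in> V0 \<and> x \<noteq> y}
     \<union> (\<Union>i\<in>{1..t}. {{v i, u} | u. u \<in> N i})"

text \<open>H is a member of the family \<H>_t (unrolled recursive definition), with body V0,
  distinguished vertex v 0 \<in> V0, added vertices v 1, ..., v t and neighbourhoods N i.\<close>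
definition in_family :: "nat \<Rightarrow> nat \<Rightarrow> nat set \<Rightarrow> (nat \<Rightarrow> nat) \<Rightarrow> (nat \<Rightarrow> nat set) \<Rightarrow> graph \<Rightarrow> bool" where
  "in_family r t V0 v N H \<longleftrightarrow>
     finite V0 \<and> card V0 = r - 1 \<and> v 0 \<in> V0 \<and>
     (\<forall>i\<in>{1..t}.
        v i \<notin> Vset V0 v (i - 1) \<and>
        N i \<subseteq> Vset V0 v (i - 1) \<and>
        v (i - 1) \<in> N i \<and>
        card (N i) = r - 2 \<and>
        (i \<ge> 2 \<longrightarrow> \<not> (N i - {v (i - 1)} \<subseteq> N (i - 1)))) \<and>
     H = Hedges V0 v N t"

end

theory Submission
  imports Defs
begin

definition Kc :: "nat set \<Rightarrow> graph" where
  "Kc V = {{x, y} | x y. x \<in> V \<and> y \<in> V \<and> x \<noteq> y}"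

lemma Kc_mono: "A \<subseteq> B \<Longrightarrow> Kc A \<subseteq> Kc B"
  unfolding Kc_def by fastforce

lemma Kc_mem: "e \<in> Kc A \<Longrightarrow> x \<in> e \<Longrightarrow> x \<in> A"
  unfolding Kc_def by fastforce

lemma Vset_0[simp]: "Vset V0 v 0 = V0"
  by (simp add: Vset_def)

lemma Vset_Suc: "Vset V0 v (Suc s) = insert (v (Suc s)) (Vset V0 v s)"
  by (auto simp add: Vset_def atLeastAtMostSuc_conv)

lemma Vset_mono: fixes a b :: nat and V0 :: "nat set" and v :: "nat \<Rightarrow> nat"
  shows "a \<le> b \<Longrightarrow> Vset V0 v a \<subseteq> Vset V0 v b"
  by (auto simp add: Vset_def)

lemma v_in: fixes i :: nat and V0 :: "nat set" and v :: "nat \<Rightarrow> nat"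
  shows "1 \<le> i \<Longrightarrow> v i \<in> Vset V0 v i"
  by (auto simp add: Vset_def)

lemma bp_Suc: "bp r G (Suc s) = bp_step r (bp r G s)"
  by (simp add: bp_def)

lemma bp_0: "bp r G 0 = G"
  by (simp add: bp_def)

lemma bp_step_mono: "G \<subseteq> bp_step r G"
  by (auto simp add: bp_step_def)

lemma bp_mono: "a \<le> b \<Longrightarrow> bp r G a \<subseteq> bp r G b"
proof (induction b)
  case 0 then show ?case by simp
next
  case (Suc b)
  show ?case
  proof (cases "a = Suc b")
    case False
    then have "bp r G a \<subseteq> bp r G b" using Suc by simp
    then show ?thesis using bp_step_mono[of "bp r G b" r] by (simp add: bp_Suc)
  qed simp
qed

locale fam =
  fixes r t V0 v N H
  assumes fam: "in_family r t V0 v N H" and r4: "r \<ge> 4"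
begin

abbreviation V where "V s \<equiv> Vset V0 v s"

lemma H_def': "H = Hedges V0 v N t" using fam by (simp add: in_family_def)
lemma V0fin: "finite V0" using fam by (simp add: in_family_def)

lemma fi:
  assumes "1 \<le> i" "i \<le> t"
  shows "v i \<notin> V (i - 1)" "N i \<subseteq> V (i - 1)" "v (i - 1) \<in> N i" "card (N i) = r - 2"
    "i \<ge> 2 \<Longrightarrow> \<not> (N i - {v (i - 1)} \<subseteq> N (i - 1))"
  using fam assms by (auto simp add: in_family_def)

lemma Nfin: "1 \<le> i \<Longrightarrow> i \<le> t \<Longrightarrow> finite (N i)"
proof -
  assume "1 \<le> i" "i \<le> t"
  then have "card (N i) \<noteq> 0" using fi(4)[of i] r4 by simp
  then show "finite (N i)" by (meson card.infinite)
qed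

lemma H_sub: "e \<in> H \<Longrightarrow> e \<subseteq> V t"
proof -
  assume "e \<in> H"
  then consider (a) "e \<in> {{x, y} | x y. x \<in> V0 \<and> y \<in> V0 \<and> x \<noteq> y}"
    | (b) i u where "i \<in> {1..t}" "u \<in> N i" "e = {v i, u}"
    unfolding H_def' Hedges_def by blast
  then show "e \<subseteq> V t"
  proof cases
    case a then show ?thesis using Vset_mono[of 0 t V0 v] by auto
  next
    case b
    have "v i \<in> V t" using v_in[of i v V0] Vset_mono[of i t V0 v] b by auto
    moreover have "u \<in> V t"
    proof -
      have le: "i - 1 \<le> t" using b by auto
      have "u \<in> V (i - 1)" using fi(2)[of i] b by auto
      then show ?thesis using Vset_mono[OF le, of V0 v] by blast
    qed
    ultimately show ?thesis using b by auto
  qed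
qed

lemma H_edge: "1 \<le> i \<Longrightarrow> i \<le> t \<Longrightarrow> u \<in> N i \<Longrightarrow> {v i, u} \<in> H"
  unfolding H_def' Hedges_def by auto

lemma Kc_in_H: "Kc V0 \<subseteq> H"
  unfolding H_def' Hedges_def Kc_def by auto

lemma nbr:
  assumes G: "G \<subseteq> H \<union> Kc (V s)" and m: "1 \<le> m" "m \<le> t" "s < m"
    and y: "y \<in> V (m - 1)" and e: "{v m, y} \<in> G"
  shows "y \<in> N m"
proof -
  have vm: "v m \<notin> V (m - 1)" using fi(1) m by auto
  have Vs: "V s \<subseteq> V (m - 1)" using Vset_mono m by auto
  have "{v m, y} \<in> H \<union> Kc (V s)" using G e by auto
  then consider (k) "{v m, y} \<in> Kc (V s)"
    | (a) "{v m, y} \<in> {{x, y} | x y. x \<in> V0 \<and> y \<in> V0 \<and> x \<noteq> y}"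
    | (b) i u where "i \<in> {1..t}" "u \<in> N i" "{v m, y} = {v i, u}"
    unfolding H_def' Hedges_def by blast
  then show ?thesis
  proof cases
    case k
    then have "v m \<in> V s" using Kc_mem by blast
    then show ?thesis using vm Vs by auto
  next
    case a
    then have "v m \<in> V0" by (auto simp: doubleton_eq_iff)
    then show ?thesis using vm Vset_mono[of 0 "m - 1" V0 v] by auto
  next
    case b
    then consider "v m = v i" "y = u" | "v m = u" "y = v i" by (auto simp: doubleton_eq_iff)
    then show ?thesis
    proof cases
      case 1
      have "i = m"
      proof (rule ccontr)
        assume "i \<noteq> m"
        then consider "i < m" | "m < i" by linarith
        then show False
        proof cases
          case 1
          then have le: "i \<le> m - 1" by simp
          have "v i \<in> V i" using v_in[of i v V0] b by auto
          then have "v i \<in> V (m - 1)" using Vset_mono[OF le, of V0 v] by blast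
          then show False using vm \<open>v m = v i\<close> by simp
        next
          case 2
          then have le: "m \<le> i - 1" by simp
          have "v m \<in> V m" using v_in[of m v V0] m by auto
          then have "v m \<in> V (i - 1)" using Vset_mono[OF le, of V0 v] by blast
          then show False using fi(1)[of i] b \<open>v m = v i\<close> by auto
        qed
      qed
      then show ?thesis using 1 b by simp
    next
      case 2
      have "v m \<in> V (i - 1)" using fi(2)[of i] b 2 by auto
      then have "\<not> i \<le> m" using vm Vset_mono[of "i - 1" "m - 1" V0 v] by (auto simp: diff_le_mono)
      then have le: "m - 1 \<le> i - 1" by simp
      then have "y \<in> V (i - 1)" using y Vset_mono[OF le, of V0 v] by blast
      then show ?thesis using fi(1)[of i] b 2 by auto
    qed
  qed
qed

lemma step_ub:
  assumes st: "s < t" and G: "G \<subseteq> H \<union> Kc (V s)" and e: "e \<in> bp_step r G"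
  shows "e \<in> H \<union> Kc (V (Suc s))"
proof -
  have KcS: "Kc (V s) \<subseteq> Kc (V (Suc s))" using Kc_mono Vset_mono[of s "Suc s" V0 v] by simp
  show ?thesis
  proof (cases "e \<in> G")
    case True then show ?thesis using G KcS by auto
  next
    case False
    then obtain K where e2: "card e = 2" and Kf: "finite K" and Kc: "card K = r" and eK: "e \<subseteq> K"
      and cl: "is_clique (G \<union> {e}) K"
      using e unfolding bp_step_def by auto
    have adj: "\<And>x y. x \<in> K \<Longrightarrow> y \<in> K \<Longrightarrow> x \<noteq> y \<Longrightarrow> {x, y} \<in> G \<or> {x, y} = e"
      using cl unfolding is_clique_def by auto
    have Gsub: "\<And>x y. {x, y} \<in> G \<Longrightarrow> x \<in> V t"
    proof -
      fix x y assume "{x, y} \<in> G"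
      then have "{x, y} \<in> H \<or> {x, y} \<in> Kc (V s)" using G by auto
      then show "x \<in> V t"
      proof
        assume "{x, y} \<in> H" then show ?thesis using H_sub by auto
      next
        assume "{x, y} \<in> Kc (V s)"
        then have "x \<in> V s" using Kc_mem by blast
        then show ?thesis using Vset_mono[of s t V0 v] st by auto
      qed
    qed
    have KVt: "K \<subseteq> V t"
    proof
      fix x assume xK: "x \<in> K"
      show "x \<in> V t"
      proof (rule ccontr)
        assume xn: "x \<notin> V t"
        have "card (K - {x}) = r - 1" using Kf Kc xK by simp
        then have "\<not> card (K - {x}) \<le> Suc 0" using r4 by simp
        then obtain y1 y2 where y: "y1 \<in> K - {x}" "y2 \<in> K - {x}" "y1 \<noteq> y2"
          using card_le_Suc0_iff_eq[of "K - {x}"] Kf by auto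
        have "{x, y1} = e" using adj[of x y1] xK y Gsub xn by auto
        moreover have "{x, y2} = e" using adj[of x y2] xK y Gsub xn by auto
        ultimately show False using y by (auto simp: doubleton_eq_iff)
      qed
    qed
    then have "\<exists>m. K \<subseteq> V m" by blast
    then obtain m where mK: "K \<subseteq> V m" and mmin: "\<forall>k<m. \<not> K \<subseteq> V k"
      using exists_least_iff[of "\<lambda>m. K \<subseteq> V m"] by blast
    have mt: "m \<le> t" using KVt mmin by (meson not_le)
    show ?thesis
    proof (cases "m \<le> Suc s")
      case True
      then have "e \<subseteq> V (Suc s)" using eK mK Vset_mono[of m "Suc s" V0 v] by auto
      moreover obtain a b where "e = {a, b}" "a \<noteq> b" using e2 card_2_iff by metis
      ultimately have "e \<in> Kc (V (Suc s))" unfolding Kc_def by auto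
      then show ?thesis by simp
    next
      case False
      then obtain m' where mm: "m = Suc m'" by (cases m) auto
      have m1: "1 \<le> m" "s < m" "s < m - 1" "m \<ge> 2" using False mm by auto
      have "\<not> K \<subseteq> V m'" using mmin mm by simp
      then have vmK: "v m \<in> K" and Km: "K - {v m} \<subseteq> V (m - 1)"
        using mK mm Vset_Suc[of V0 v m'] by auto
      have Nmf: "finite (N m)" using Nfin m1 mt by auto
      have cNm: "card (N m) = r - 2" using fi(4) m1 mt by auto
      have nb1: "\<And>y. y \<in> K - {v m} \<Longrightarrow> {v m, y} \<in> G \<Longrightarrow> y \<in> N m"
        using nbr[OF G m1(1) mt m1(2)] Km by auto
      obtain w where w: "w \<in> K - {v m}" "w \<notin> N m"
      proof (rule ccontr)
        assume "\<not> thesis"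
        then have "K - {v m} \<subseteq> N m" using that by auto
        then have "card (K - {v m}) \<le> card (N m)" using card_mono Nmf by auto
        then show False using cNm Kc vmK Kf r4 by simp
      qed
      have ew: "e = {v m, w}" using adj[of "v m" w] w vmK nb1 by auto
      have sub: "K - {v m} - {w} \<subseteq> N m"
      proof
        fix y assume y: "y \<in> K - {v m} - {w}"
        then have "{v m, y} \<in> G \<or> {v m, y} = e" using adj[of "v m" y] vmK by auto
        moreover have "{v m, y} \<noteq> e" using ew y by (auto simp: doubleton_eq_iff)
        ultimately show "y \<in> N m" using nb1 y by auto
      qed
      have "card (K - {v m} - {w}) = r - 2" using Kc vmK w Kf by auto
      then have NmK: "N m = K - {v m} - {w}" using card_subset_eq[OF Nmf sub] cNm by simp
      have vm1: "v (m - 1) \<in> N m" using fi(3) m1 mt by auto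
      have vmn: "v m \<notin> V (m - 1)" using fi(1) m1 mt by auto
      have NmV: "N m \<subseteq> V (m - 1)" using fi(2) m1 mt by auto
      have "N m - {v (m - 1)} \<subseteq> N (m - 1)"
      proof
        fix y assume y: "y \<in> N m - {v (m - 1)}"
        have "{v (m - 1), y} \<in> G \<or> {v (m - 1), y} = e"
          using adj[of "v (m - 1)" y] y vm1 NmK by auto
        moreover have "{v (m - 1), y} \<noteq> e"
          using ew vm1 NmV vmn w by (auto simp: doubleton_eq_iff)
        ultimately have yG: "{v (m - 1), y} \<in> G" by simp
        have "V (m - 1) = insert (v (m - 1)) (V (m - 1 - 1))"
          using Vset_Suc[of V0 v "m - 2"] m1 by (simp add: numeral_2_eq_2 Suc_diff_Suc)
        then have "y \<in> V (m - 1 - 1)" using y NmV by auto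
        then show "y \<in> N (m - 1)" using nbr[OF G _ _ m1(3) _ yG] m1 mt by auto
      qed
      then show ?thesis using fi(5)[of m] m1 mt by auto
    qed
  qed
qed

lemma ub: "s \<le> t \<Longrightarrow> bp r H s \<subseteq> H \<union> Kc (V s)"
proof (induction s)
  case 0 then show ?case by (simp add: bp_0)
next
  case (Suc s)
  then have "bp r H s \<subseteq> H \<union> Kc (V s)" by simp
  then show ?case using step_ub[of s "bp r H s"] Suc.prems by (auto simp: bp_Suc)
qed

lemma lb: "s \<le> t \<Longrightarrow> is_clique (bp r H s) (V s)"
proof (induction s)
  case 0
  have "\<forall>x\<in>V0. \<forall>y\<in>V0. x \<noteq> y \<longrightarrow> {x, y} \<in> H"
    using Kc_in_H unfolding Kc_def by blast
  then show ?case unfolding is_clique_def bp_0 by simp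
next
  case (Suc s)
  have IH: "is_clique (bp r H s) (V s)" using Suc by simp
  have HG: "H \<subseteq> bp r H s" using bp_mono[of 0 s r H] by (simp add: bp_0)
  let ?G = "bp r H s"
  let ?x = "v (Suc s)"
  have st: "1 \<le> Suc s" "Suc s \<le> t" using Suc by auto
  have xn: "?x \<notin> V s" using fi(1)[OF st] by simp
  have NV: "N (Suc s) \<subseteq> V s" using fi(2)[OF st] by simp
  have key: "{?x, y} \<in> bp_step r ?G" if y: "y \<in> V s" for y
  proof (cases "y \<in> N (Suc s)")
    case True
    then show ?thesis using H_edge[OF st True] HG bp_step_mono by blast
  next
    case False
    let ?K = "insert ?x (insert y (N (Suc s)))"
    have Nf: "finite (N (Suc s))" using Nfin[OF st] .
    have yx: "y \<noteq> ?x" using y xn by auto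
    have xN: "?x \<notin> N (Suc s)" using xn NV by auto
    have cK: "card ?K = r" using Nf False xN yx fi(4)[OF st] r4 by simp
    have cl: "is_clique (?G \<union> {{?x, y}}) ?K"
      unfolding is_clique_def
    proof (intro ballI impI)
      fix a b assume a: "a \<in> ?K" and b: "b \<in> ?K" and ab: "a \<noteq> b"
      have inV: "\<And>c. c \<in> ?K \<Longrightarrow> c \<noteq> ?x \<Longrightarrow> c \<in> V s" using y NV by auto
      have xe: "\<And>c. c \<in> N (Suc s) \<Longrightarrow> {?x, c} \<in> ?G" using H_edge[OF st] HG by blast
      show "{a, b} \<in> ?G \<union> {{?x, y}}"
      proof (cases "a = ?x")
        case True
        then have "b = y \<or> b \<in> N (Suc s)" using b ab by blast
        then show ?thesis using True xe by blast
      next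
        case an: False
        show ?thesis
        proof (cases "b = ?x")
          case True
          then have "b \<noteq> a" using an by auto
          have "a = y \<or> a \<in> N (Suc s)" using a an by blast
          then have "{b, a} \<in> ?G \<union> {{?x, y}}" using True xe by blast
          then show ?thesis by (simp add: insert_commute)
        next
          case False
          have "a \<in> V s" "b \<in> V s" using inV a b an False by auto
          then have "{a, b} \<in> ?G" using IH ab unfolding is_clique_def by blast
          then show ?thesis by blast
        qed
      qed
    qed
    have "card {?x, y} = 2" using yx by simp
    moreover have "{?x, y} \<subseteq> ?K" by blast
    moreover have "finite ?K" using Nf by simp
    ultimately have "{?x, y} \<in> {e. card e = 2 \<and>
      (\<exists>K. finite K \<and> card K = r \<and> e \<subseteq> K \<and> is_clique (?G \<union> {e}) K)}"
      using cK cl by blast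
    then show ?thesis unfolding bp_step_def by blast
  qed
  show ?case unfolding is_clique_def
  proof (intro ballI impI)
    fix a b assume a: "a \<in> V (Suc s)" and b: "b \<in> V (Suc s)" and ab: "a \<noteq> b"
    have Gm: "?G \<subseteq> bp r H (Suc s)" using bp_mono[of s "Suc s" r H] by simp
    have aV: "a = ?x \<or> a \<in> V s" and bV: "b = ?x \<or> b \<in> V s" using a b Vset_Suc[of V0 v s] by auto
    show "{a, b} \<in> bp r H (Suc s)"
    proof (cases "a = ?x")
      case True
      then have "b \<in> V s" using bV ab by auto
      then show ?thesis using key True by (simp add: bp_Suc)
    next
      case False
      note an = this
      show ?thesis
      proof (cases "b = ?x")
        case True
        then have "a \<in> V s" using aV an by auto
        then have "{b, a} \<in> bp r H (Suc s)" using key True by (simp add: bp_Suc)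
        then show ?thesis by (simp add: insert_commute)
      next
        case False
        have "a \<in> V s" "b \<in> V s" using aV bV an False by auto
        then have "{a, b} \<in> ?G" using IH ab unfolding is_clique_def by blast
        then show ?thesis using Gm by blast
      qed
    qed
  qed
qed

end

theorem proposition1:
  fixes r t :: nat and V0 :: "nat set" and v :: "nat \<Rightarrow> nat"
    and N :: "nat \<Rightarrow> nat set" and H :: graph
  assumes "r \<ge> 4" and "t \<ge> 1"
    and "in_family r t V0 v N H"
  shows "(\<forall>u. (t \<ge> 2 \<and> u \<in> Vset V0 v (t - 2)) \<longrightarrow>
            ({u, v t} \<in> H \<or>
             ({u, v t} \<in> bp r H t \<and> {u, v t} \<notin> bp r H (t - 1))))
       \<and> (\<forall>s\<le>t. is_clique (bp r H s) (Vset V0 v s))"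
proof -
  interpret fam r t V0 v N H using assms by (unfold_locales) auto
  have B: "\<forall>s\<le>t. is_clique (bp r H s) (Vset V0 v s)" using lb by blast
  have A: "{u, v t} \<in> H \<or> ({u, v t} \<in> bp r H t \<and> {u, v t} \<notin> bp r H (t - 1))"
    if u: "t \<ge> 2" "u \<in> Vset V0 v (t - 2)" for u
  proof (cases "{u, v t} \<in> H")
    case False
    have vt: "v t \<notin> Vset V0 v (t - 1)" using fi(1)[of t] assms by auto
    have le: "t - 2 \<le> t - 1" by arith
    have le1: "t - 1 \<le> t" by simp
    have uV: "u \<in> Vset V0 v (t - 1)" using u(2) Vset_mono[OF le, of V0 v] by blast
    have ut: "u \<in> Vset V0 v t" using uV Vset_mono[OF le1, of V0 v] by blast
    have vtin: "v t \<in> Vset V0 v t" using v_in[of t v V0] assms(2) by blast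
    have une: "u \<noteq> v t" using uV vt by blast
    have cl: "is_clique (bp r H t) (Vset V0 v t)" using lb[of t] by simp
    have in1: "{u, v t} \<in> bp r H t" using cl ut vtin une unfolding is_clique_def by blast
    have "bp r H (t - 1) \<subseteq> H \<union> Kc (Vset V0 v (t - 1))" using ub[OF le1] .
    moreover have "{u, v t} \<notin> Kc (Vset V0 v (t - 1))"
      using vt Kc_mem by blast
    ultimately show ?thesis using in1 False by auto
  qed simp
  show ?thesis using A B by blast
qed

end
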